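(* Let $\mathbb{F}$ be a field, $d\geq3$ and $V$ a vector space over $\mathbb{F}$ of dimension $d+1$. Let $E^*_0,\dots,E^*_d$ be a system of mutually orthogonal idempotents in $\mathrm{End}(V)$ and $A\in\mathrm{End}(V)$ with $E^*_iAE^*_j=0$ if $|i-j|>1$ and $E^*_iAE^*_j\neq0$ if $|i-j|=1$. Assume $A$ is multiplicity-free and bipartite with primitive idempotents $E_0,\dots,E_d$ and eigenvalues $\theta_0,\dots,\theta_d$. Let $\theta^*_0,\dots,\theta^*_d\in\mathbb{F}$ be mutually distinct and $A^*=\sum_i\theta^*_iE^*_i$. Assume $E_0$ is normalizing, $(E_0,E_1)$ is a tail, and $E_2$ is the vertex of $\Delta$ other than $E_0$ adjacent to $E_1$. Then $\theta_1(\theta^*_{d-1}-\theta^*_3)=\theta_2(\theta^*_d-\theta^*_2)$.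
   Context: A system of mutually orthogonal idempotents: $E^*_iE^*_j=\delta_{ij}E^*_i$, $\operatorname{rank}E^*_i=1$. $A$ multiplicity-free: $d+1$ distinct eigenvalues in $\mathbb{F}$; $E_i$ is the projection onto the $\theta_i$-eigenspace along the other eigenspaces. Bipartite: $\operatorname{tr}(E^*_iA)=0$ for all $i$. $\Delta$: graph on $E_0,\dots,E_d$ with $E_i\neq E_j$ adjacent iff $E_iA^*E_j\neq0$. $(E_0,E_1)$ is a tail if $E_0$ is adjacent to no vertex other than $E_1$ and $E_1$ is adjacent to at most one vertex other than $E_0$. The matrix $Y$ representing $A$ w.r.t. a basis $v_0,\dots,v_d$ satisfies $Av_j=\sum_iY_{ij}v_i$. An eigenvalue $\theta$ of $A$ is normalizing if some basis with $v_i\in E^*_iV$ makes every row sum of the matrix representing $A$ equal to $\theta$; $E_i$ is normalizing if $\theta_i$ is. *)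

theory Defs
  imports "Jordan_Normal_Form.DL_Rank" "Jordan_Normal_Form.Char_Poly"
begin

text \<open>Matrices over a field F represent End(V), V = F^n with n = d+1.\<close>

definition mtrace :: "'a::comm_ring_1 mat \<Rightarrow> 'a" where
  "mtrace M = (\<Sum>i<dim_row M. M $$ (i,i))"

definition orth_idempotents :: "nat \<Rightarrow> (nat \<Rightarrow> 'a::field mat) \<Rightarrow> bool" where
  "orth_idempotents d Es \<longleftrightarrow>
     (\<forall>i\<le>d. Es i \<in> carrier_mat (d+1) (d+1) \<and> vec_space.rank (d+1) (Es i) = 1) \<and>
     (\<forall>i\<le>d. \<forall>j\<le>d. Es i * Es j = (if i = j then Es i else 0\<^sub>m (d+1) (d+1)))"

definition primitive_idempotents ::
  "nat \<Rightarrow> 'a::field mat \<Rightarrow> (nat \<Rightarrow> 'a) \<Rightarrow> (nat \<Rightarrow> 'a mat) \<Rightarrow> bool" where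
  "primitive_idempotents d A th E \<longleftrightarrow>
     inj_on th {..d} \<and> (\<forall>i\<le>d. eigenvalue A (th i)) \<and>
     (\<forall>i\<le>d. E i \<in> carrier_mat (d+1) (d+1) \<and>
        (\<forall>j\<le>d. \<forall>v\<in>carrier_vec (d+1). A *\<^sub>v v = th j \<cdot>\<^sub>v v \<longrightarrow>
             E i *\<^sub>v v = (if i = j then v else 0\<^sub>v (d+1))))"

definition bipartite :: "nat \<Rightarrow> (nat \<Rightarrow> 'a::field mat) \<Rightarrow> 'a mat \<Rightarrow> bool" where
  "bipartite d Es A \<longleftrightarrow> (\<forall>i\<le>d. mtrace (Es i * A) = 0)"

text \<open>An eigenvalue theta is normalizing: there is a basis v_0..v_d (the columns of an
  invertible matrix P) with v_i in Es i V such that the matrix Y representing A w.r.t. this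
  basis (A v_j = sum_i Y_ij v_i, i.e. A P = P Y) has all row sums equal to theta.\<close>
definition normalizing :: "nat \<Rightarrow> (nat \<Rightarrow> 'a::field mat) \<Rightarrow> 'a mat \<Rightarrow> 'a \<Rightarrow> bool" where
  "normalizing d Es A \<theta> \<longleftrightarrow>
     (\<exists>P Y. P \<in> carrier_mat (d+1) (d+1) \<and> Y \<in> carrier_mat (d+1) (d+1) \<and> det P \<noteq> 0 \<and>
        (\<forall>i\<le>d. Es i *\<^sub>v col P i = col P i) \<and> A * P = P * Y \<and>
        (\<forall>i\<le>d. (\<Sum>j\<le>d. Y $$ (i,j)) = \<theta>))"

definition dual_op :: "nat \<Rightarrow> (nat \<Rightarrow> 'a::field) \<Rightarrow> (nat \<Rightarrow> 'a mat) \<Rightarrow> 'a mat" where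
  "dual_op d ths Es = mat (d+1) (d+1) (\<lambda>(k,l). \<Sum>i\<le>d. ths i * Es i $$ (k,l))"

definition Delta_adj :: "nat \<Rightarrow> (nat \<Rightarrow> 'a::field mat) \<Rightarrow> 'a mat \<Rightarrow> nat \<Rightarrow> nat \<Rightarrow> bool" where
  "Delta_adj d E As i j \<longleftrightarrow> i \<le> d \<and> j \<le> d \<and> E i \<noteq> E j \<and> E i * As * E j \<noteq> 0\<^sub>m (d+1) (d+1)"

definition is_tail :: "nat \<Rightarrow> (nat \<Rightarrow> 'a::field mat) \<Rightarrow> 'a mat \<Rightarrow> nat \<Rightarrow> nat \<Rightarrow> bool" where
  "is_tail d E As a b \<longleftrightarrow>
     (\<forall>j\<le>d. Delta_adj d E As a j \<longrightarrow> E j = E b) \<and>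
     (\<forall>j\<le>d. \<forall>k\<le>d. Delta_adj d E As b j \<and> E j \<noteq> E a \<and> Delta_adj d E As b k \<and> E k \<noteq> E a
        \<longrightarrow> E j = E k)"

end

theory Submission
  imports Defs
begin


lemma quad_two_roots:
  fixes G B C x r1 r2 :: "'a::field"
  assumes "G*r1^2 + B*r1 + C = 0" "G*r2^2 + B*r2 + C = 0" "r1 \<noteq> r2"
  shows "G*x^2 + B*x + C = G*(x-r1)*(x-r2)"
proof -
  have "(B + G*(r1+r2)) * (r1 - r2) = (G*r1^2 + B*r1 + C) - (G*r2^2 + B*r2 + C)"
    by (simp add: algebra_simps power2_eq_square)
  also have "\<dots> = 0" using assms(1,2) by simp
  finally have h: "B + G*(r1+r2) = 0" using assms(3) by simp
  have b: "B = - G*(r1+r2)"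
  proof -
    have "B = (B + G*(r1+r2)) - G*(r1+r2)" by simp
    thus ?thesis using h by simp
  qed
  have "C = (G*r1^2+B*r1+C) - G*r1^2 - B*r1" by simp
  also have "\<dots> = - G*r1^2 + G*(r1+r2)*r1" using assms(1) b by simp
  finally have c: "C = G * r1 * r2" by (simp add: algebra_simps power2_eq_square)
  have "G*x^2 + B*x + C = G*x^2 + (- G*(r1+r2))*x + G * r1 * r2" by (simp only: b c)
  thus ?thesis by (simp add: algebra_simps power2_eq_square)
qed

lemma final_algebra:
  fixes k th et c b p q r s0 s1 s2 s3 sdm sd :: "'a::field"
  assumes k: "k \<noteq> 0" and p: "p \<noteq> 0" and d02: "s0 \<noteq> s2" and d0d: "s0 \<noteq> sd"
    and S0: "k*s1 = th*s0" and S2: "c*s1 + b*s3 = th*s2" and cb: "c + b = k"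
    and Sd: "k*sdm = th*sd"
    and Z0: "k*(p*s1^2+q*s1+r) = et*(p*s0^2+q*s0+r)"
    and Z2: "c*(p*s1^2+q*s1+r) + b*(p*s3^2+q*s3+r) = et*(p*s2^2+q*s2+r)"
    and Zd: "k*(p*sdm^2+q*sdm+r) = et*(p*sd^2+q*sd+r)"
  shows "th*(sdm - s3) = et*(sd - s2)"
proof -
  define G where "G = p*(th^2 - k*et)"
  define B where "B = k*q*(th-et)"
  define C where "C = k*r*(k-et)"
  have g0: "G*s0^2 + B*s0 + C = 0"
  proof -
    have "k*(k*(p*s1^2+q*s1+r) - et*(p*s0^2+q*s0+r)) = 0" using Z0 by simp
    moreover have "k*(k*(p*s1^2+q*s1+r) - et*(p*s0^2+q*s0+r)) = p*(k*s1)^2 + k*q*(k*s1) + k*k*r - k*et*(p*s0^2+q*s0+r)"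
      by (simp add: algebra_simps power2_eq_square)
    ultimately show ?thesis unfolding G_def B_def C_def S0 by (simp add: algebra_simps power2_eq_square)
  qed
  have gd: "G*sd^2 + B*sd + C = 0"
  proof -
    have "k*(k*(p*sdm^2+q*sdm+r) - et*(p*sd^2+q*sd+r)) = 0" using Zd by simp
    moreover have "k*(k*(p*sdm^2+q*sdm+r) - et*(p*sd^2+q*sd+r)) = p*(k*sdm)^2 + k*q*(k*sdm) + k*k*r - k*et*(p*sd^2+q*sd+r)"
      by (simp add: algebra_simps power2_eq_square)
    ultimately show ?thesis unfolding G_def B_def C_def Sd by (simp add: algebra_simps power2_eq_square)
  qed
  have c1: "c*s1^2 + b*s3^2 = (s1+s3)*th*s2 - k*s1*s3"
  proof -
    have "c*s1^2 + b*s3^2 = (s1+s3)*(c*s1+b*s3) - s1*s3*(c+b)" by (simp add: algebra_simps power2_eq_square)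
    also have "\<dots> = (s1+s3)*(th*s2) - s1*s3*k" by (simp only: S2 cb)
    finally show ?thesis by (simp add: algebra_simps)
  qed
  have c2: "c*s1 + b*s3 = th*s2" by (rule S2)
  have g2: "p*(k*s1 - th*s2)*(k*s3 - th*s2) = G*s2^2 + B*s2 + C"
  proof -
    have e: "c*(p*s1^2+q*s1+r) + b*(p*s3^2+q*s3+r) = p*(c*s1^2 + b*s3^2) + q*(c*s1+b*s3) + r*(c+b)"
      by (simp add: algebra_simps)
    have "p*((s1+s3)*th*s2 - k*s1*s3) + q*(th*s2) + r*k = et*(p*s2^2+q*s2+r)"
      using Z2 unfolding e c1 c2 cb .
    hence "k*(p*((s1+s3)*th*s2 - k*s1*s3) + q*(th*s2) + r*k - et*(p*s2^2+q*s2+r)) = 0" by simp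
    thus ?thesis unfolding G_def B_def C_def by (simp add: algebra_simps power2_eq_square)
  qed
  have "G*s2^2 + B*s2 + C = G*(s2-s0)*(s2-sd)" by (rule quad_two_roots[OF g0 gd d0d])
  with g2 S0 have "p*(th*s0 - th*s2)*(k*s3 - th*s2) = p*(th^2 - k*et)*(s2-s0)*(s2-sd)" 
    unfolding G_def by simp
  hence "(p*(s0-s2))*(th*(k*s3 - th*s2)) = (p*(s0-s2))*((th^2 - k*et)*(sd-s2))"
    by (simp add: algebra_simps)
  hence key: "th*(k*s3 - th*s2) = (th^2 - k*et)*(sd-s2)" using p d02 by simp
  have "k*(th*(sdm - s3)) = k*(et*(sd - s2))"
  proof -
    have "k*(th*(sdm - s3)) = th*(k*sdm) - th*k*s3" by (simp add: algebra_simps)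
    also have "\<dots> = th*th*sd - th*k*s3" using Sd by simp
    finally show ?thesis using key by (simp add: algebra_simps power2_eq_square)
  qed
  thus ?thesis using k by simp
qed



lemma sum_two_support:
  fixes g :: "nat \<Rightarrow> 'a::comm_monoid_add"
  assumes "a \<le> d" "b \<le> d" "a \<noteq> b" "\<forall>l\<le>d. l \<noteq> a \<and> l \<noteq> b \<longrightarrow> g l = 0"
  shows "(\<Sum>l\<le>d. g l) = g a + g b"
proof -
  have "(\<Sum>l\<le>d. g l) = (\<Sum>l\<in>{a,b}. g l)"
    by (rule sum.mono_neutral_right) (use assms in auto)
  thus ?thesis using assms(3) by simp
qed

lemma sum_one_support:
  fixes g :: "nat \<Rightarrow> 'a::comm_monoid_add"
  assumes "a \<le> d" "\<forall>l\<le>d. l \<noteq> a \<longrightarrow> g l = 0"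
  shows "(\<Sum>l\<le>d. g l) = g a"
proof -
  have "(\<Sum>l\<le>d. g l) = (\<Sum>l\<in>{a}. g l)"
    by (rule sum.mono_neutral_right) (use assms in auto)
  thus ?thesis by simp
qed

locale tri =
  fixes d :: nat and Y :: "nat \<Rightarrow> nat \<Rightarrow> 'a::field" and k :: 'a
  assumes d1: "d \<ge> 1"
  and Yz: "\<forall>i\<le>d. \<forall>j\<le>d. j \<noteq> i+1 \<and> i \<noteq> j+1 \<longrightarrow> Y i j = 0"
  and Ynz: "\<forall>i<d. Y i (Suc i) \<noteq> 0 \<and> Y (Suc i) i \<noteq> 0"
  and rs: "\<forall>i\<le>d. (\<Sum>j\<le>d. Y i j) = k"
begin

lemma col_mid: "0 < m \<Longrightarrow> m < d \<Longrightarrow> (\<Sum>l\<le>d. g l * Y l m) = g (m-1) * Y (m-1) m + g (m+1) * Y (m+1) m"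
  by (rule sum_two_support) (use Yz in auto)
lemma col_0: "(\<Sum>l\<le>d. g l * Y l 0) = g 1 * Y 1 0"
  by (rule sum_one_support) (use Yz d1 in auto)
lemma col_d: "(\<Sum>l\<le>d. g l * Y l d) = g (d-1) * Y (d-1) d"
  by (rule sum_one_support) (use Yz d1 in auto)
lemma row_mid: "0 < m \<Longrightarrow> m < d \<Longrightarrow> Y m (m-1) + Y m (m+1) = k"
proof -
  assume "0 < m" "m < d"
  hence "(\<Sum>l\<le>d. Y m l) = Y m (m-1) + Y m (m+1)"
    by (intro sum_two_support) (use Yz in auto)
  thus ?thesis using rs \<open>m<d\<close> by simp
qed
lemma row_0: "Y 0 1 = k"
proof -
  have "(\<Sum>l\<le>d. Y 0 l) = Y 0 1" by (rule sum_one_support) (use Yz d1 in auto)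
  thus ?thesis using rs by simp
qed
lemma row_d: "Y d (d-1) = k"
proof -
  have "(\<Sum>l\<le>d. Y d l) = Y d (d-1)" by (rule sum_one_support) (use Yz d1 in auto)
  thus ?thesis using rs by simp
qed
lemma k_nz: "k \<noteq> 0" using row_0 Ynz d1 by auto

context
  fixes r0 :: "nat \<Rightarrow> 'a"
  assumes L0: "\<forall>m\<le>d. (\<Sum>l\<le>d. r0 l * Y l m) = k * r0 m"
begin

lemma ktrick: "m < d \<Longrightarrow> r0 (Suc m) * Y (Suc m) m = r0 m * Y m (Suc m)"
proof (induction m)
  case 0
  have "(\<Sum>l\<le>d. r0 l * Y l 0) = k * r0 0" using L0 by simp
  thus ?case using col_0 row_0 by simp
next
  case (Suc m)
  have "(\<Sum>l\<le>d. r0 l * Y l (Suc m)) = k * r0 (Suc m)" using L0 Suc.prems by simp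
  moreover have "(\<Sum>l\<le>d. r0 l * Y l (Suc m)) = r0 m * Y m (Suc m) + r0 (Suc (Suc m)) * Y (Suc (Suc m)) (Suc m)"
    using col_mid[of "Suc m" r0] Suc.prems by simp
  ultimately have A: "r0 (Suc (Suc m)) * Y (Suc (Suc m)) (Suc m) = k * r0 (Suc m) - r0 m * Y m (Suc m)"
    by (simp add: algebra_simps)
  have C: "Y (Suc m) (Suc (Suc m)) = k - Y (Suc m) m" using row_mid[of "Suc m"] Suc.prems by (simp add: algebra_simps)
  have IH: "r0 (Suc m) * Y (Suc m) m = r0 m * Y m (Suc m)" using Suc by simp
  show ?case unfolding A C using IH by (simp add: algebra_simps)
qed

lemma r0_step: "m < d \<Longrightarrow> r0 (Suc m) = 0 \<longleftrightarrow> r0 m = 0"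
  using ktrick[of m] Ynz by auto

lemma r0_all: "m \<le> d \<Longrightarrow> r0 m = 0 \<longleftrightarrow> r0 0 = 0"
proof (induction m)
  case 0 thus ?case by simp
next
  case (Suc m) thus ?case using r0_step[of m] by simp
qed

context
  assumes nz: "\<exists>m\<le>d. r0 m \<noteq> 0"
begin
lemma r0_nz: "m \<le> d \<Longrightarrow> r0 m \<noteq> 0"
  using nz r0_all by blast

context
  fixes f :: "nat \<Rightarrow> 'a" and lam :: 'a
  assumes Lf: "\<forall>m\<le>d. (\<Sum>l\<le>d. (r0 l * f l) * Y l m) = lam * (r0 m * f m)"
begin

lemma right_0: "k * f 1 = lam * f 0"
proof -
  have "(r0 1 * f 1) * Y 1 0 = lam * (r0 0 * f 0)" using Lf col_0[of "\<lambda>l. r0 l * f l"] by simp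
  moreover have "r0 1 * Y 1 0 = r0 0 * k" using ktrick[of 0] d1 row_0 by simp
  ultimately have "r0 0 * (k * f 1) = r0 0 * (lam * f 0)" by (simp add: algebra_simps)
  thus ?thesis using r0_nz[of 0] by simp
qed

lemma right_d: "k * f (d-1) = lam * f d"
proof -
  have "(r0 (d-1) * f (d-1)) * Y (d-1) d = lam * (r0 d * f d)" using Lf col_d[of "\<lambda>l. r0 l * f l"] by simp
  moreover have "r0 (d-1) * Y (d-1) d = r0 d * k"
    using ktrick[of "d-1"] d1 row_d by (simp add: mult.commute)
  ultimately have "r0 d * (k * f (d-1)) = r0 d * (lam * f d)" by (simp add: algebra_simps)
  thus ?thesis using r0_nz[of d] by simp
qed

lemma right_mid: "0 < m \<Longrightarrow> m < d \<Longrightarrow> Y m (m-1) * f (m-1) + Y m (m+1) * f (m+1) = lam * f m"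
proof -
  assume m: "0 < m" "m < d"
  have "r0 (m-1) * f (m-1) * Y (m-1) m + r0 (m+1) * f (m+1) * Y (m+1) m = lam * (r0 m * f m)"
    using Lf col_mid[of m "\<lambda>l. r0 l * f l"] m by simp
  moreover have "r0 (m-1) * Y (m-1) m = r0 m * Y m (m-1)"
    using ktrick[of "m-1"] m by simp
  moreover have "r0 (m+1) * Y (m+1) m = r0 m * Y m (m+1)"
    using ktrick[of m] m by simp
  ultimately have "r0 m * (Y m (m-1) * f (m-1) + Y m (m+1) * f (m+1)) = r0 m * (lam * f m)"
    by (simp add: algebra_simps)
  thus ?thesis using r0_nz[of m] m by simp
qed
end
end
end
end



lemma core:
  fixes d::nat and Y :: "nat \<Rightarrow> nat \<Rightarrow> 'a::field" and r0 r1 r2 t :: "nat \<Rightarrow> 'a"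
  assumes d: "d \<ge> 3"
  and Yz: "\<forall>i\<le>d. \<forall>j\<le>d. j \<noteq> i+1 \<and> i \<noteq> j+1 \<longrightarrow> Y i j = 0"
  and Ynz: "\<forall>i<d. Y i (Suc i) \<noteq> 0 \<and> Y (Suc i) i \<noteq> 0"
  and rs: "\<forall>i\<le>d. (\<Sum>j\<le>d. Y i j) = k"
  and L0: "\<forall>m\<le>d. (\<Sum>l\<le>d. r0 l * Y l m) = k * r0 m"
  and L1: "\<forall>m\<le>d. (\<Sum>l\<le>d. r1 l * Y l m) = th1 * r1 m"
  and L2: "\<forall>m\<le>d. (\<Sum>l\<le>d. r2 l * Y l m) = th2 * r2 m"
  and nz: "\<exists>m\<le>d. r0 m \<noteq> 0"
  and D0: "\<forall>m\<le>d. r0 m * t m = b00 * r0 m + b01 * r1 m"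
  and D1: "\<forall>m\<le>d. r1 m * t m = b10 * r0 m + b11 * r1 m + b12 * r2 m"
  and inj: "inj_on t {..d}"
  shows "th1 * (t (d-1) - t 3) = th2 * (t d - t 2)"
proof -
  interpret tri d Y k by unfold_locales (use d Yz Ynz rs in auto)
  have r0nz: "\<And>m. m \<le> d \<Longrightarrow> r0 m \<noteq> 0" using r0_nz[OF L0 nz] .
  have tne: "\<And>i j. i \<le> d \<Longrightarrow> j \<le> d \<Longrightarrow> i \<noteq> j \<Longrightarrow> t i \<noteq> t j"
    using inj unfolding inj_on_def by auto
  have b01: "b01 \<noteq> 0"
  proof
    assume "b01 = 0"
    hence "\<And>m. m \<le> d \<Longrightarrow> t m = b00" using D0 r0nz by (metis add.right_neutral mult_cancel_left mult.commute mult_zero_left)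
    hence "t 0 = t 1" using d by simp
    thus False using tne[of 0 1] d by simp
  qed
  define s where "s = (\<lambda>m. (t m - b00) / b01)"
  have ts: "\<And>m. t m = b00 + b01 * s m" unfolding s_def using b01 by simp
  have r1s: "\<And>m. m \<le> d \<Longrightarrow> r1 m = r0 m * s m"
  proof -
    fix m assume m: "m \<le> d"
    have "b01 * r1 m = r0 m * (t m - b00)" using D0 m by (simp add: algebra_simps)
    thus "r1 m = r0 m * s m" unfolding s_def using b01 by (simp add: field_simps)
  qed
  define z where "z = (\<lambda>m. b01 * (s m)^2 + (b00 - b11) * s m + (- b10))"
  have r2z: "\<And>m. m \<le> d \<Longrightarrow> b12 * r2 m = r0 m * z m"
  proof -
    fix m assume m: "m \<le> d"
    have "b12 * r2 m = r1 m * t m - b10 * r0 m - b11 * r1 m" using D1 m by (simp add: algebra_simps)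
    thus "b12 * r2 m = r0 m * z m" unfolding z_def using r1s[OF m] ts[of m]
      by (simp add: algebra_simps power2_eq_square)
  qed
  have Ls: "\<forall>m\<le>d. (\<Sum>l\<le>d. (r0 l * s l) * Y l m) = th1 * (r0 m * s m)"
  proof (intro allI impI)
    fix m assume m: "m \<le> d"
    have "(\<Sum>l\<le>d. (r0 l * s l) * Y l m) = (\<Sum>l\<le>d. r1 l * Y l m)"
      by (rule sum.cong) (use r1s in auto)
    thus "(\<Sum>l\<le>d. (r0 l * s l) * Y l m) = th1 * (r0 m * s m)" using L1 m r1s[OF m] by simp
  qed
  have Lz: "\<forall>m\<le>d. (\<Sum>l\<le>d. (r0 l * z l) * Y l m) = th2 * (r0 m * z m)"
  proof (intro allI impI)
    fix m assume m: "m \<le> d"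
    have "(\<Sum>l\<le>d. (r0 l * z l) * Y l m) = (\<Sum>l\<le>d. b12 * (r2 l * Y l m))"
      by (rule sum.cong) (use r2z in auto)
    also have "\<dots> = b12 * (th2 * r2 m)" using L2 m by (simp add: sum_distrib_left[symmetric])
    finally show "(\<Sum>l\<le>d. (r0 l * z l) * Y l m) = th2 * (r0 m * z m)" using r2z[OF m] by (simp add: algebra_simps)
  qed
  have S0: "k * s 1 = th1 * s 0" by (rule right_0[OF L0 nz Ls])
  have Sd: "k * s (d-1) = th1 * s d" by (rule right_d[OF L0 nz Ls])
  have S2: "Y 2 1 * s 1 + Y 2 3 * s 3 = th1 * s 2" using right_mid[OF L0 nz Ls, of 2] d by simp
  have Z0: "k * z 1 = th2 * z 0" by (rule right_0[OF L0 nz Lz])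
  have Zd: "k * z (d-1) = th2 * z d" by (rule right_d[OF L0 nz Lz])
  have Z2: "Y 2 1 * z 1 + Y 2 3 * z 3 = th2 * z 2" using right_mid[OF L0 nz Lz, of 2] d by simp
  have cb: "Y 2 1 + Y 2 3 = k" using row_mid[of 2] d by simp
  have s02: "s 0 \<noteq> s 2" using tne[of 0 2] ts d by force
  have s0d: "s 0 \<noteq> s d" using tne[of 0 d] ts d by force
  have "th1 * (s (d-1) - s 3) = th2 * (s d - s 2)"
    apply (rule final_algebra[OF k_nz b01 s02 s0d S0 S2 cb Sd, where q = "b00 - b11" and r = "- b10"])
    using Z0 Z2 Zd unfolding z_def by simp_all
  hence "b01 * (th1 * (s (d-1) - s 3)) = b01 * (th2 * (s d - s 2))" by simp
  thus ?thesis unfolding ts by (simp add: algebra_simps)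
qed



lemma mult_entry:
  assumes "X \<in> carrier_mat n m" "Z \<in> carrier_mat m p" "i < n" "j < p"
  shows "(X * Z) $$ (i,j) = (\<Sum>l<m. X $$ (i,l) * Z $$ (l,j))"
  using assms by (simp add: scalar_prod_def atLeast0LessThan)

lemma mv_entry:
  assumes "X \<in> carrier_mat n m" "v \<in> carrier_vec m" "i < n"
  shows "(X *\<^sub>v v) $ i = (\<Sum>l<m. X $$ (i,l) * v $ l)"
  using assms by (simp add: scalar_prod_def atLeast0LessThan)

lemma inv_ex:
  assumes "X \<in> carrier_mat n n" "det X \<noteq> (0::'a::field)"
  obtains Xi where "Xi \<in> carrier_mat n n" "X * Xi = 1\<^sub>m n" "Xi * X = 1\<^sub>m n"
proof -
  have "X \<in> Units (ring_mat TYPE('a) n ())" by (rule det_non_zero_imp_unit[OF assms])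
  thus ?thesis using that unfolding Units_def ring_mat_def by auto
qed

lemma nonzero_col_row:
  assumes "U \<in> carrier_mat n n" "V \<in> carrier_mat n n" "V * U = 1\<^sub>m n" "i < n"
  shows "\<exists>a<n. U $$ (a,i) \<noteq> (0::'a::field)" "\<exists>b<n. V $$ (i,b) \<noteq> 0"
proof -
  have "(V * U) $$ (i,i) = 1" using assms(3,4) by simp
  moreover have "(V * U) $$ (i,i) = (\<Sum>l<n. V $$ (i,l) * U $$ (l,i))"
    by (rule mult_entry[OF assms(2,1) assms(4) assms(4)])
  ultimately have s: "(\<Sum>l<n. V $$ (i,l) * U $$ (l,i)) = 1" by simp
  show "\<exists>a<n. U $$ (a,i) \<noteq> 0"
  proof (rule ccontr)
    assume "\<not> ?thesis"
    hence "(\<Sum>l<n. V $$ (i,l) * U $$ (l,i)) = 0" by (intro sum.neutral) auto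
    with s show False by simp
  qed
  show "\<exists>b<n. V $$ (i,b) \<noteq> 0"
  proof (rule ccontr)
    assume "\<not> ?thesis"
    hence "(\<Sum>l<n. V $$ (i,l) * U $$ (l,i)) = 0" by (intro sum.neutral) auto
    with s show False by simp
  qed
qed

lemma idem_entry:
  assumes X: "X \<in> carrier_mat n n" and U: "U \<in> carrier_mat n n" and V: "V \<in> carrier_mat n n"
    and UV: "U * V = 1\<^sub>m n" and i: "i < n"
    and col: "\<And>j. j < n \<Longrightarrow> X *\<^sub>v col U j = (if j = i then col U i else 0\<^sub>v n)"
    and a: "a < n" and b: "b < n"
  shows "X $$ (a,b) = U $$ (a,i) * (V $$ (i,b) :: 'a::field)"
proof -
  have XU: "(X * U) $$ (a,j) = (if j = i then U $$ (a,i) else 0)" if j: "j < n" for j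
  proof -
    have "(X * U) $$ (a,j) = (X *\<^sub>v col U j) $ a" using X U a j by simp
    thus ?thesis using col[OF j] a i U by auto
  qed
  have "X = X * (U * V)" using X UV by simp
  also have "\<dots> = (X * U) * V" using X U V by simp
  finally have "X $$ (a,b) = ((X * U) * V) $$ (a,b)" by simp
  also have "\<dots> = (\<Sum>l<n. (X * U) $$ (a,l) * V $$ (l,b))"
    by (rule mult_entry[of _ n n _ n]) (use X U V a b in auto)
  also have "\<dots> = (\<Sum>l<n. (if l = i then U $$ (a,i) * V $$ (i,b) else 0))"
    by (rule sum.cong) (auto simp: XU)
  also have "\<dots> = U $$ (a,i) * V $$ (i,b)" using i by simp
  finally show ?thesis .
qed

lemma sandwich:
  assumes X: "X \<in> carrier_mat n n" and Z: "Z \<in> carrier_mat n n" and C: "C \<in> carrier_mat n n"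
    and U: "U \<in> carrier_mat n n" and V: "V \<in> carrier_mat n n"
    and Xe: "\<And>a b. a < n \<Longrightarrow> b < n \<Longrightarrow> X $$ (a,b) = U $$ (a,i) * V $$ (i,b)"
    and Ze: "\<And>a b. a < n \<Longrightarrow> b < n \<Longrightarrow> Z $$ (a,b) = U $$ (a,j) * V $$ (j,b)"
    and i: "i < n" and j: "j < n" and a: "a < n" and b: "b < n"
  shows "(X * C * Z) $$ (a,b) = U $$ (a,i) * (V * C * U) $$ (i,j) * (V $$ (j,b) :: 'a::field)"
proof -
  have XC: "X * C \<in> carrier_mat n n" using X C by simp
  have VC: "V * C \<in> carrier_mat n n" using V C by simp
  have "(X * C * Z) $$ (a,b) = (\<Sum>l<n. (X*C) $$ (a,l) * Z $$ (l,b))"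
    by (rule mult_entry[OF XC Z a b])
  also have "\<dots> = (\<Sum>l<n. (\<Sum>m<n. U $$ (a,i) * V $$ (i,m) * C $$ (m,l)) * (U $$ (l,j) * V $$ (j,b)))"
    by (rule sum.cong) (auto simp: mult_entry[OF X C a] Xe Ze a b)
  also have "\<dots> = (\<Sum>l<n. U $$ (a,i) * ((\<Sum>m<n. V $$ (i,m) * C $$ (m,l)) * U $$ (l,j)) * V $$ (j,b))"
  proof (rule sum.cong)
    fix l
    have inner: "(\<Sum>m<n. U $$ (a,i) * V $$ (i,m) * C $$ (m,l)) = U $$ (a,i) * (\<Sum>m<n. V $$ (i,m) * C $$ (m,l))"
      by (simp add: sum_distrib_left mult.assoc)
    show "(\<Sum>m<n. U $$ (a,i) * V $$ (i,m) * C $$ (m,l)) * (U $$ (l,j) * V $$ (j,b)) =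
      U $$ (a,i) * ((\<Sum>m<n. V $$ (i,m) * C $$ (m,l)) * U $$ (l,j)) * V $$ (j,b)"
      by (subst inner) (simp only: mult.assoc)
  qed simp
  also have "\<dots> = U $$ (a,i) * (\<Sum>l<n. (\<Sum>m<n. V $$ (i,m) * C $$ (m,l)) * U $$ (l,j)) * V $$ (j,b)"
    by (simp only: sum_distrib_left sum_distrib_right)
  also have "(\<Sum>l<n. (\<Sum>m<n. V $$ (i,m) * C $$ (m,l)) * U $$ (l,j)) = (V * C * U) $$ (i,j)"
    by (simp add: mult_entry[OF VC U i j] mult_entry[OF V C i])
  finally show ?thesis .
qed

lemma zero_from_sandwich:
  assumes "X * C * Z = 0\<^sub>m n n"
    and "\<And>a b. a < n \<Longrightarrow> b < n \<Longrightarrow> (X * C * Z) $$ (a,b) = U $$ (a,i) * w * (V $$ (j,b) :: 'a::field)"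
    and "\<exists>a<n. U $$ (a,i) \<noteq> 0" "\<exists>b<n. V $$ (j,b) \<noteq> 0"
  shows "w = 0"
proof -
  obtain a b where "a < n" "b < n" "U $$ (a,i) \<noteq> 0" "V $$ (j,b) \<noteq> 0" using assms(3,4) by auto
  thus ?thesis using assms(1) assms(2)[of a b] by simp
qed

lemma nonzero_from_sandwich:
  assumes "X * C * Z \<in> carrier_mat n n" "X * C * Z \<noteq> 0\<^sub>m n n"
    and "\<And>a b. a < n \<Longrightarrow> b < n \<Longrightarrow> (X * C * Z) $$ (a,b) = U $$ (a,i) * w * (V $$ (j,b) :: 'a::field)"
  shows "w \<noteq> 0"
proof
  assume "w = 0"
  hence "X * C * Z = 0\<^sub>m n n" using assms(1,3) by (intro eq_matI) auto
  thus False using assms(2) by simp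
qed



lemma eig_indep:
  fixes A :: "'a::field mat" and m :: nat
  assumes A: "A \<in> carrier_mat n n"
    and ev: "\<And>j. j < m \<Longrightarrow> e j \<in> carrier_vec n \<and> e j \<noteq> 0\<^sub>v n \<and> A *\<^sub>v e j = th j \<cdot>\<^sub>v e j"
    and inj: "inj_on th {..<m}"
  shows "(\<forall>a<n. (\<Sum>j<m. c j * e j $ a) = 0) \<Longrightarrow> j < m \<Longrightarrow> c j = 0"
  using ev inj
proof (induction m arbitrary: c j)
  case 0 thus ?case by simp
next
  case (Suc m)
  note h = Suc.prems(1)
  have evs: "\<And>j. j < Suc m \<Longrightarrow> e j \<in> carrier_vec n \<and> e j \<noteq> 0\<^sub>v n \<and> A *\<^sub>v e j = th j \<cdot>\<^sub>v e j"
    using Suc.prems(3) .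
  have Ae: "\<And>j a. j < Suc m \<Longrightarrow> a < n \<Longrightarrow> (\<Sum>b<n. A $$ (a,b) * e j $ b) = th j * e j $ a"
  proof -
    fix j a assume j: "j < Suc m" and a: "a < n"
    have "(A *\<^sub>v e j) $ a = (\<Sum>b<n. A $$ (a,b) * e j $ b)" using mv_entry[OF A _ a] evs[OF j] by blast
    thus "(\<Sum>b<n. A $$ (a,b) * e j $ b) = th j * e j $ a" using evs[OF j] a by (auto simp: carrier_vecD)
  qed
  have h2: "(\<Sum>j<Suc m. c j * th j * e j $ a) = 0" if a: "a < n" for a
  proof -
    have "0 = (\<Sum>b<n. A $$ (a,b) * (\<Sum>j<Suc m. c j * e j $ b))" using h by simp
    also have "\<dots> = (\<Sum>j<Suc m. c j * (\<Sum>b<n. A $$ (a,b) * e j $ b))"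
      by (simp add: sum_distrib_left sum.swap[of _ "{..<n}"] algebra_simps)
    also have "\<dots> = (\<Sum>j<Suc m. c j * th j * e j $ a)"
      by (rule sum.cong) (use Ae a in auto)
    finally show ?thesis by simp
  qed
  have h3: "(\<Sum>j<m. (c j * (th j - th m)) * e j $ a) = 0" if a: "a < n" for a
  proof -
    have "(\<Sum>j<Suc m. (c j * (th j - th m)) * e j $ a) = (\<Sum>j<Suc m. c j * th j * e j $ a) - th m * (\<Sum>j<Suc m. c j * e j $ a)"
      by (simp add: sum_distrib_left sum_subtractf[symmetric] algebra_simps)
    also have "\<dots> = 0" using h2[OF a] h a by simp
    finally show ?thesis by simp
  qed
  have inj': "inj_on th {..<m}" using Suc.prems(4) by (rule inj_on_subset) auto
  have cj: "c j * (th j - th m) = 0" if j: "j < m" for j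
    using Suc.IH[of "\<lambda>j. c j * (th j - th m)" j] h3 j evs inj' by auto
  have cz: "c j = 0" if j: "j < m" for j
  proof -
    have "th j \<noteq> th m" using Suc.prems(4) j unfolding inj_on_def by auto
    thus ?thesis using cj[OF j] by simp
  qed
  have "c m * e m $ a = 0" if a: "a < n" for a
  proof -
    have "(\<Sum>j<Suc m. c j * e j $ a) = 0" using h a by simp
    moreover have "(\<Sum>j<m. c j * e j $ a) = 0" using cz by simp
    ultimately show ?thesis by simp
  qed
  moreover obtain a where a: "a < n" "e m $ a \<noteq> 0"
  proof -
    have "e m \<noteq> 0\<^sub>v n" "e m \<in> carrier_vec n" using evs[of m] by auto
    thus ?thesis using that by (metis eq_vecI carrier_vecD index_zero_vec)
  qed
  ultimately have cm: "c m = 0" by auto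
  show ?case
  proof (cases "j < m")
    case True thus ?thesis using cz by simp
  next
    case False hence "j = m" using Suc.prems(2) by simp
    thus ?thesis using cm by simp
  qed
qed

lemma eig_det:
  fixes A :: "'a::field mat"
  assumes A: "A \<in> carrier_mat n n"
    and ev: "\<And>j. j < n \<Longrightarrow> e j \<in> carrier_vec n \<and> e j \<noteq> 0\<^sub>v n \<and> A *\<^sub>v e j = th j \<cdot>\<^sub>v e j"
    and inj: "inj_on th {..<n}"
  shows "det (mat n n (\<lambda>(a,j). e j $ a)) \<noteq> 0"
proof
  let ?M = "mat n n (\<lambda>(a,j). e j $ a)"
  assume "det ?M = 0"
  then obtain v where v: "v \<in> carrier_vec n" "v \<noteq> 0\<^sub>v n" "?M *\<^sub>v v = 0\<^sub>v n"
    using det_0_iff_vec_prod_zero_field[of ?M n] by auto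
  have "\<forall>a<n. (\<Sum>j<n. v $ j * e j $ a) = 0"
  proof (intro allI impI)
    fix a assume a: "a < n"
    have "(?M *\<^sub>v v) $ a = (\<Sum>j<n. ?M $$ (a,j) * v $ j)" by (rule mv_entry[OF _ v(1) a]) simp
    also have "\<dots> = (\<Sum>j<n. v $ j * e j $ a)" by (rule sum.cong) (use a in auto)
    finally show "(\<Sum>j<n. v $ j * e j $ a) = 0" using v(3) a by simp
  qed
  hence "\<And>j. j < n \<Longrightarrow> v $ j = 0" using eig_indep[OF A ev inj] by blast
  hence "v = 0\<^sub>v n" using v(1) by (intro eq_vecI) auto
  thus False using v(2) by simp
qed



lemma zero_mat_mult_vec: "v \<in> carrier_vec m \<Longrightarrow> (0\<^sub>m n m :: 'a::field mat) *\<^sub>v v = 0\<^sub>v n"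
  by (intro eq_vecI) (auto simp: scalar_prod_def)

theorem lemma11p1:
  fixes d :: nat and Es E :: "nat \<Rightarrow> 'a::field mat" and A :: "'a mat"
    and th ths :: "nat \<Rightarrow> 'a"
  assumes "d \<ge> 3"
    and "orth_idempotents d Es"
    and "A \<in> carrier_mat (d+1) (d+1)"
    and "\<forall>i\<le>d. \<forall>j\<le>d. (i > j + 1 \<or> j > i + 1) \<longrightarrow> Es i * A * Es j = 0\<^sub>m (d+1) (d+1)"
    and "\<forall>i\<le>d. \<forall>j\<le>d. (i = j + 1 \<or> j = i + 1) \<longrightarrow> Es i * A * Es j \<noteq> 0\<^sub>m (d+1) (d+1)"
    and "primitive_idempotents d A th E"
    and "bipartite d Es A"
    and "inj_on ths {..d}"
    and "normalizing d Es A (th 0)"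
    and "is_tail d E (dual_op d ths Es) 0 1"
    and "Delta_adj d E (dual_op d ths Es) 1 2"
  shows "th 1 * (ths (d-1) - ths 3) = th 2 * (ths d - ths 2)"
proof -
  note d3 = assms(1)
  note A = assms(3)
  define n where "n = d + 1"
  have ltn: "\<And>i. i < n \<longleftrightarrow> i \<le> d" unfolding n_def by auto
  have sumn: "\<And>f::nat \<Rightarrow> 'a. (\<Sum>l<n. f l) = (\<Sum>l\<le>d. f l)" unfolding n_def
    by (simp add: lessThan_Suc_atMost)
  have An: "A \<in> carrier_mat n n" using A unfolding n_def .
  have Esc: "\<And>i. i \<le> d \<Longrightarrow> Es i \<in> carrier_mat n n"
    using assms(2) unfolding orth_idempotents_def n_def by auto
  have Esm: "\<And>i j. i \<le> d \<Longrightarrow> j \<le> d \<Longrightarrow> Es i * Es j = (if i = j then Es i else 0\<^sub>m n n)"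
    using assms(2) unfolding orth_idempotents_def n_def by auto
  obtain P Y where P: "P \<in> carrier_mat n n" and Y: "Y \<in> carrier_mat n n" and detP: "det P \<noteq> 0"
    and PEs: "\<And>i. i \<le> d \<Longrightarrow> Es i *\<^sub>v col P i = col P i" and AP: "A * P = P * Y"
    and rsY: "\<And>i. i \<le> d \<Longrightarrow> (\<Sum>j\<le>d. Y $$ (i,j)) = th 0"
    using assms(9) unfolding normalizing_def n_def by blast
  obtain Q where Q: "Q \<in> carrier_mat n n" and PQ: "P * Q = 1\<^sub>m n" and QP: "Q * P = 1\<^sub>m n"
    using inv_ex[OF P detP] by blast
  have YQAP: "Q * A * P = Y"
  proof -
    have "Q * A * P = Q * (A * P)" using Q An P by simp
    also have "\<dots> = Q * (P * Y)" using AP by simp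
    also have "\<dots> = (Q * P) * Y" using Q P Y by simp
    finally show ?thesis using QP Y by simp
  qed
  have Es_e: "\<And>i a b. i \<le> d \<Longrightarrow> a < n \<Longrightarrow> b < n \<Longrightarrow> Es i $$ (a,b) = P $$ (a,i) * Q $$ (i,b)"
  proof -
    fix i a b assume i: "i \<le> d" and a: "a < n" and b: "b < n"
    show "Es i $$ (a,b) = P $$ (a,i) * Q $$ (i,b)"
    proof (rule idem_entry[OF Esc[OF i] P Q PQ _ _ a b])
      show "i < n" using i ltn by simp
      fix j assume j: "j < n"
      have cP: "col P j \<in> carrier_vec n" using P by auto
      have "Es i *\<^sub>v col P j = Es i *\<^sub>v (Es j *\<^sub>v col P j)" using PEs j ltn by simp
      also have "\<dots> = (Es i * Es j) *\<^sub>v col P j" using Esc[OF i] Esc[of j] j ltn cP by simp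
      also have "\<dots> = (if j = i then col P i else 0\<^sub>v n)"
        using Esm[OF i, of j] j ltn PEs[OF i] zero_mat_mult_vec[OF cP] by auto
      finally show "Es i *\<^sub>v col P j = (if j = i then col P i else 0\<^sub>v n)" .
    qed
  qed
  have Es_sw: "\<And>i j a b. i \<le> d \<Longrightarrow> j \<le> d \<Longrightarrow> a < n \<Longrightarrow> b < n \<Longrightarrow>
     (Es i * A * Es j) $$ (a,b) = P $$ (a,i) * Y $$ (i,j) * Q $$ (j,b)"
  proof -
    fix i j a b assume i: "i \<le> d" and j: "j \<le> d" and a: "a < n" and b: "b < n"
    have "(Es i * A * Es j) $$ (a,b) = P $$ (a,i) * (Q * A * P) $$ (i,j) * Q $$ (j,b)"
      by (rule sandwich[OF Esc[OF i] Esc[OF j] An P Q]) (use Es_e i j a b ltn in auto)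
    thus "(Es i * A * Es j) $$ (a,b) = P $$ (a,i) * Y $$ (i,j) * Q $$ (j,b)" using YQAP by simp
  qed
  have Pcol: "\<And>i. i \<le> d \<Longrightarrow> \<exists>a<n. P $$ (a,i) \<noteq> 0" using nonzero_col_row(1)[OF P Q QP] ltn by auto
  have Qrow: "\<And>i. i \<le> d \<Longrightarrow> \<exists>b<n. Q $$ (i,b) \<noteq> 0" using nonzero_col_row(2)[OF P Q QP] ltn by auto
  have Yz1: "\<And>i j. i \<le> d \<Longrightarrow> j \<le> d \<Longrightarrow> (i > j + 1 \<or> j > i + 1) \<Longrightarrow> Y $$ (i,j) = 0"
  proof -
    fix i j assume i: "i \<le> d" and j: "j \<le> d" and ij: "i > j + 1 \<or> j > i + 1"
    have "Es i * A * Es j = 0\<^sub>m n n" using assms(4) i j ij unfolding n_def by blast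
    thus "Y $$ (i,j) = 0"
      by (rule zero_from_sandwich[where U = P and V = Q and i = i and j = j])
         (use Es_sw i j Pcol Qrow in auto)
  qed
  have Ynz1: "\<And>i j. i \<le> d \<Longrightarrow> j \<le> d \<Longrightarrow> (i = j + 1 \<or> j = i + 1) \<Longrightarrow> Y $$ (i,j) \<noteq> 0"
  proof -
    fix i j assume i: "i \<le> d" and j: "j \<le> d" and ij: "i = j + 1 \<or> j = i + 1"
    have ne: "Es i * A * Es j \<noteq> 0\<^sub>m n n" using assms(5) i j ij unfolding n_def by blast
    have c: "Es i * A * Es j \<in> carrier_mat n n" using Esc[OF i] Esc[OF j] An by simp
    show "Y $$ (i,j) \<noteq> 0"
      by (rule nonzero_from_sandwich[OF c ne, where U = P and V = Q and i = i and j = j])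
         (use Es_sw i j in auto)
  qed
  have Ydiag: "\<And>i. i \<le> d \<Longrightarrow> Y $$ (i,i) = 0"
  proof -
    fix i assume i: "i \<le> d"
    have "mtrace (Es i * A) = 0" using assms(7) i unfolding bipartite_def by blast
    moreover have "mtrace (Es i * A) = (\<Sum>a<n. (\<Sum>m<n. P $$ (a,i) * Q $$ (i,m) * A $$ (m,a)))"
    proof -
      have "dim_row (Es i * A) = n" using Esc[OF i] by simp
      hence "mtrace (Es i * A) = (\<Sum>a<n. (Es i * A) $$ (a,a))" unfolding mtrace_def by simp
      also have "\<dots> = (\<Sum>a<n. (\<Sum>m<n. P $$ (a,i) * Q $$ (i,m) * A $$ (m,a)))"
        by (rule sum.cong) (auto simp: mult_entry[OF Esc[OF i] An] Es_e i)
      finally show ?thesis .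
    qed
    moreover have "Y $$ (i,i) = (\<Sum>a<n. (\<Sum>m<n. Q $$ (i,m) * A $$ (m,a)) * P $$ (a,i))"
    proof -
      have QA: "Q * A \<in> carrier_mat n n" using Q An by simp
      have "Y $$ (i,i) = (Q * A * P) $$ (i,i)" using YQAP by simp
      also have "\<dots> = (\<Sum>a<n. (Q * A) $$ (i,a) * P $$ (a,i))" using mult_entry[OF QA P] i ltn by simp
      also have "\<dots> = (\<Sum>a<n. (\<Sum>m<n. Q $$ (i,m) * A $$ (m,a)) * P $$ (a,i))"
        by (rule sum.cong) (use mult_entry[OF Q An] i ltn in auto)
      finally show ?thesis .
    qed
    moreover have "(\<Sum>a<n. (\<Sum>m<n. Q $$ (i,m) * A $$ (m,a)) * P $$ (a,i)) = (\<Sum>a<n. (\<Sum>m<n. P $$ (a,i) * Q $$ (i,m) * A $$ (m,a)))"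
      by (rule sum.cong) (simp_all add: sum_distrib_left sum_distrib_right ac_simps)
    ultimately show "Y $$ (i,i) = 0" by simp
  qed
  have Yz: "\<forall>i\<le>d. \<forall>j\<le>d. j \<noteq> i+1 \<and> i \<noteq> j+1 \<longrightarrow> Y $$ (i,j) = 0"
  proof (intro allI impI)
    fix i j assume i: "i \<le> d" and j: "j \<le> d" and ij: "j \<noteq> i+1 \<and> i \<noteq> j+1"
    show "Y $$ (i,j) = 0"
    proof (cases "i = j")
      case True thus ?thesis using Ydiag i by simp
    next
      case False
      hence "i > j + 1 \<or> j > i + 1" using ij by arith
      thus ?thesis using Yz1[OF i j] by blast
    qed
  qed
  have Ynz: "\<forall>i<d. Y $$ (i, Suc i) \<noteq> 0 \<and> Y $$ (Suc i, i) \<noteq> 0"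
    using Ynz1 by auto

  have thinj: "inj_on th {..d}" and thev: "\<And>i. i \<le> d \<Longrightarrow> eigenvalue A (th i)"
    and Ec: "\<And>i. i \<le> d \<Longrightarrow> E i \<in> carrier_mat n n"
    and Eact: "\<And>i j v. i \<le> d \<Longrightarrow> j \<le> d \<Longrightarrow> v \<in> carrier_vec n \<Longrightarrow> A *\<^sub>v v = th j \<cdot>\<^sub>v v \<Longrightarrow>
         E i *\<^sub>v v = (if i = j then v else 0\<^sub>v n)"
    using assms(6) unfolding primitive_idempotents_def n_def by auto
  have "\<forall>j. \<exists>v. j \<le> d \<longrightarrow> eigenvector A v (th j)"
    using thev unfolding eigenvalue_def by blast
  then obtain e where e: "\<And>j. j \<le> d \<Longrightarrow> eigenvector A (e j) (th j)" by metis
  have ev: "\<And>j. j < n \<Longrightarrow> e j \<in> carrier_vec n \<and> e j \<noteq> 0\<^sub>v n \<and> A *\<^sub>v e j = th j \<cdot>\<^sub>v e j"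
    using e An ltn unfolding eigenvector_def by auto
  have thinj': "inj_on th {..<n}" using thinj ltn by (simp add: lessThan_Suc_atMost n_def)
  define M where "M = mat n n (\<lambda>(a,j). e j $ a)"
  have Mc: "M \<in> carrier_mat n n" unfolding M_def by simp
  have detM: "det M \<noteq> 0" unfolding M_def by (rule eig_det[OF An ev thinj'])
  obtain Mi where Mi: "Mi \<in> carrier_mat n n" and MMi: "M * Mi = 1\<^sub>m n" and MiM: "Mi * M = 1\<^sub>m n"
    using inv_ex[OF Mc detM] by blast
  have colM: "\<And>j. j < n \<Longrightarrow> col M j = e j"
  proof -
    fix j assume j: "j < n"
    have dj: "dim_vec (e j) = n" using ev[OF j] by (simp add: carrier_vecD)
    show "col M j = e j" unfolding M_def using j dj by (intro eq_vecI) auto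
  qed
  have Mij: "\<And>a j. a < n \<Longrightarrow> j < n \<Longrightarrow> M $$ (a,j) = e j $ a" unfolding M_def by simp
  have Eeig: "\<And>i j. i \<le> d \<Longrightarrow> j \<le> d \<Longrightarrow> E i *\<^sub>v e j = (if i = j then e j else 0\<^sub>v n)"
    using Eact ev ltn by auto
  have E_e: "\<And>i a b. i \<le> d \<Longrightarrow> a < n \<Longrightarrow> b < n \<Longrightarrow> E i $$ (a,b) = M $$ (a,i) * Mi $$ (i,b)"
  proof -
    fix i a b assume i: "i \<le> d" and a: "a < n" and b: "b < n"
    show "E i $$ (a,b) = M $$ (a,i) * Mi $$ (i,b)"
    proof (rule idem_entry[OF Ec[OF i] Mc Mi MMi _ _ a b])
      show "i < n" using i ltn by simp
      fix j assume j: "j < n"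
      show "E i *\<^sub>v col M j = (if j = i then col M i else 0\<^sub>v n)"
        using Eeig[OF i, of j] j ltn colM i by auto
    qed
  qed
  have Edist: "\<And>p q. p \<le> d \<Longrightarrow> q \<le> d \<Longrightarrow> p \<noteq> q \<Longrightarrow> E p \<noteq> E q"
  proof
    fix p q assume p: "p \<le> d" and q: "q \<le> d" and pq: "p \<noteq> q" and eq: "E p = E q"
    have "e p = 0\<^sub>v n" using Eeig[OF p p] Eeig[OF q p] pq eq by simp
    thus False using ev[of p] p ltn by simp
  qed
  have AM: "\<And>a l. a < n \<Longrightarrow> l < n \<Longrightarrow> (A * M) $$ (a,l) = th l * M $$ (a,l)"
  proof -
    fix a l assume a: "a < n" and l: "l < n"
    have "(A * M) $$ (a,l) = (A *\<^sub>v col M l) $ a" using An Mc a l by simp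
    also have "\<dots> = (th l \<cdot>\<^sub>v e l) $ a" using colM[OF l] ev[OF l] by simp
    also have "\<dots> = th l * M $$ (a,l)" using ev[OF l] a l Mij by (auto simp: carrier_vecD)
    finally show "(A * M) $$ (a,l) = th l * M $$ (a,l)" .
  qed
  have MiAM: "\<And>j l. j < n \<Longrightarrow> l < n \<Longrightarrow> (Mi * (A * M)) $$ (j,l) = (if j = l then th j else 0)"
  proof -
    fix j l assume j: "j < n" and l: "l < n"
    have AMc: "A * M \<in> carrier_mat n n" using An Mc by simp
    have "(Mi * (A * M)) $$ (j,l) = (\<Sum>a<n. Mi $$ (j,a) * (A * M) $$ (a,l))" by (rule mult_entry[OF Mi AMc j l])
    also have "\<dots> = th l * (\<Sum>a<n. Mi $$ (j,a) * M $$ (a,l))"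
      by (simp add: AM l sum_distrib_left ac_simps)
    also have "(\<Sum>a<n. Mi $$ (j,a) * M $$ (a,l)) = (Mi * M) $$ (j,l)" by (rule mult_entry[OF Mi Mc j l, symmetric])
    finally show "(Mi * (A * M)) $$ (j,l) = (if j = l then th j else 0)" using MiM j l by simp
  qed
  have MiA: "\<And>j b. j < n \<Longrightarrow> b < n \<Longrightarrow> (Mi * A) $$ (j,b) = th j * Mi $$ (j,b)"
  proof -
    fix j b assume j: "j < n" and b: "b < n"
    have c1: "Mi * (A * M) \<in> carrier_mat n n" using Mi An Mc by simp
    have "Mi * A = Mi * A * (M * Mi)" using Mi An MMi by simp
    also have "\<dots> = (Mi * (A * M)) * Mi"
      by (simp only: assoc_mult_mat[OF Mi An mult_carrier_mat[OF Mc Mi]] assoc_mult_mat[OF Mi mult_carrier_mat[OF An Mc] Mi] assoc_mult_mat[OF An Mc Mi])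
    finally have "(Mi * A) $$ (j,b) = ((Mi * (A * M)) * Mi) $$ (j,b)" by simp
    also have "\<dots> = (\<Sum>l<n. (Mi * (A * M)) $$ (j,l) * Mi $$ (l,b))" by (rule mult_entry[OF c1 Mi j b])
    also have "\<dots> = (\<Sum>l<n. if l = j then th j * Mi $$ (j,b) else 0)"
      by (rule sum.cong) (auto simp: MiAM j)
    also have "\<dots> = th j * Mi $$ (j,b)" using j by simp
    finally show "(Mi * A) $$ (j,b) = th j * Mi $$ (j,b)" .
  qed
  define R where "R = Mi * P"
  have Rc: "R \<in> carrier_mat n n" unfolding R_def using Mi P by simp
  have RY: "\<And>j m. j < n \<Longrightarrow> m < n \<Longrightarrow> (R * Y) $$ (j,m) = th j * R $$ (j,m)"
  proof -
    fix j m assume j: "j < n" and m: "m < n"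
    have MiAc: "Mi * A \<in> carrier_mat n n" using Mi An by simp
    have "R * Y = Mi * (P * Y)" unfolding R_def using Mi P Y by simp
    also have "\<dots> = (Mi * A) * P" using AP Mi An P by simp
    finally have "(R * Y) $$ (j,m) = ((Mi * A) * P) $$ (j,m)" by simp
    also have "\<dots> = (\<Sum>a<n. (Mi * A) $$ (j,a) * P $$ (a,m))" by (rule mult_entry[OF MiAc P j m])
    also have "\<dots> = th j * (\<Sum>a<n. Mi $$ (j,a) * P $$ (a,m))"
      by (simp add: MiA j sum_distrib_left ac_simps)
    also have "(\<Sum>a<n. Mi $$ (j,a) * P $$ (a,m)) = R $$ (j,m)" unfolding R_def by (rule mult_entry[OF Mi P j m, symmetric])
    finally show "(R * Y) $$ (j,m) = th j * R $$ (j,m)" .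
  qed
  have Lj: "\<And>j. j \<le> d \<Longrightarrow> \<forall>m\<le>d. (\<Sum>l\<le>d. R $$ (j,l) * Y $$ (l,m)) = th j * R $$ (j,m)"
  proof (intro allI impI)
    fix j m assume j: "j \<le> d" and m: "m \<le> d"
    have "(R * Y) $$ (j,m) = (\<Sum>l<n. R $$ (j,l) * Y $$ (l,m))" using mult_entry[OF Rc Y] j m ltn by simp
    thus "(\<Sum>l\<le>d. R $$ (j,l) * Y $$ (l,m)) = th j * R $$ (j,m)" using RY j m ltn sumn by simp
  qed

  define As where "As = dual_op d ths Es"
  have Asc: "As \<in> carrier_mat n n" unfolding As_def dual_op_def n_def by simp
  have As_e: "\<And>a b. a < n \<Longrightarrow> b < n \<Longrightarrow> As $$ (a,b) = (\<Sum>i<n. ths i * (P $$ (a,i) * Q $$ (i,b)))"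
  proof -
    fix a b assume a: "a < n" and b: "b < n"
    have "As $$ (a,b) = (\<Sum>i\<le>d. ths i * Es i $$ (a,b))" unfolding As_def dual_op_def using a b n_def by simp
    also have "\<dots> = (\<Sum>i\<le>d. ths i * (P $$ (a,i) * Q $$ (i,b)))"
      by (rule sum.cong) (auto simp: Es_e a b)
    finally show "As $$ (a,b) = (\<Sum>i<n. ths i * (P $$ (a,i) * Q $$ (i,b)))" using sumn by simp
  qed
  have AsP: "\<And>a m. a < n \<Longrightarrow> m < n \<Longrightarrow> (As * P) $$ (a,m) = ths m * P $$ (a,m)"
  proof -
    fix a m assume a: "a < n" and m: "m < n"
    have "(As * P) $$ (a,m) = (\<Sum>b<n. As $$ (a,b) * P $$ (b,m))" by (rule mult_entry[OF Asc P a m])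
    also have "\<dots> = (\<Sum>b<n. \<Sum>i<n. ths i * P $$ (a,i) * (Q $$ (i,b) * P $$ (b,m)))"
      by (rule sum.cong) (simp_all add: As_e a sum_distrib_right mult.assoc)
    also have "\<dots> = (\<Sum>i<n. \<Sum>b<n. ths i * P $$ (a,i) * (Q $$ (i,b) * P $$ (b,m)))"
      by (rule sum.swap)
    also have "\<dots> = (\<Sum>i<n. ths i * P $$ (a,i) * (\<Sum>b<n. Q $$ (i,b) * P $$ (b,m)))"
      by (simp add: sum_distrib_left)
    also have "\<dots> = (\<Sum>i<n. ths i * P $$ (a,i) * (if i = m then 1 else 0))"
    proof (rule sum.cong)
      fix i assume "i \<in> {..<n}"
      hence i: "i < n" by simp
      have "(\<Sum>b<n. Q $$ (i,b) * P $$ (b,m)) = (Q * P) $$ (i,m)" by (rule mult_entry[OF Q P i m, symmetric])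
      thus "ths i * P $$ (a,i) * (\<Sum>b<n. Q $$ (i,b) * P $$ (b,m)) = ths i * P $$ (a,i) * (if i = m then 1 else 0)"
        using QP i m by simp
    qed simp
    also have "\<dots> = ths m * P $$ (a,m)" using m by (simp add: if_distrib cong: if_cong)
    finally show "(As * P) $$ (a,m) = ths m * P $$ (a,m)" .
  qed
  define B where "B = Mi * As * M"
  have Bc: "B \<in> carrier_mat n n" unfolding B_def using Mi Asc Mc by simp
  have BR: "\<And>j m. j < n \<Longrightarrow> m < n \<Longrightarrow> (B * R) $$ (j,m) = ths m * R $$ (j,m)"
  proof -
    fix j m assume j: "j < n" and m: "m < n"
    have MMiP: "M * (Mi * P) = P"
    proof -
      have "M * (Mi * P) = (M * Mi) * P" by (rule assoc_mult_mat[OF Mc Mi P, symmetric])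
      also have "\<dots> = P" using MMi P by simp
      finally show ?thesis .
    qed
    have "B * R = Mi * (As * (M * (Mi * P)))" unfolding B_def R_def
      by (simp only: assoc_mult_mat[OF Mi Asc Mc] assoc_mult_mat[OF Mi mult_carrier_mat[OF Asc Mc] mult_carrier_mat[OF Mi P]]
          assoc_mult_mat[OF Asc Mc mult_carrier_mat[OF Mi P]])
    also have "\<dots> = Mi * (As * P)" by (simp only: MMiP)
    finally have "(B * R) $$ (j,m) = (Mi * (As * P)) $$ (j,m)" by simp
    also have "\<dots> = (\<Sum>a<n. Mi $$ (j,a) * (As * P) $$ (a,m))"
      by (rule mult_entry[OF Mi _ j m]) (use Asc P in simp)
    also have "\<dots> = ths m * (\<Sum>a<n. Mi $$ (j,a) * P $$ (a,m))"
      by (simp add: AsP m sum_distrib_left ac_simps)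
    also have "(\<Sum>a<n. Mi $$ (j,a) * P $$ (a,m)) = R $$ (j,m)" unfolding R_def by (rule mult_entry[OF Mi P j m, symmetric])
    finally show "(B * R) $$ (j,m) = ths m * R $$ (j,m)" .
  qed
  have E_sw: "\<And>i j a b. i \<le> d \<Longrightarrow> j \<le> d \<Longrightarrow> a < n \<Longrightarrow> b < n \<Longrightarrow>
     (E i * As * E j) $$ (a,b) = M $$ (a,i) * B $$ (i,j) * Mi $$ (j,b)"
  proof -
    fix i j a b assume i: "i \<le> d" and j: "j \<le> d" and a: "a < n" and b: "b < n"
    show "(E i * As * E j) $$ (a,b) = M $$ (a,i) * B $$ (i,j) * Mi $$ (j,b)"
      unfolding B_def
      by (rule sandwich[OF Ec[OF i] Ec[OF j] Asc Mc Mi]) (use E_e i j a b ltn in auto)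
  qed
  have Mcol: "\<And>i. i \<le> d \<Longrightarrow> \<exists>a<n. M $$ (a,i) \<noteq> 0" using nonzero_col_row(1)[OF Mc Mi MiM] ltn by auto
  have Mirow: "\<And>i. i \<le> d \<Longrightarrow> \<exists>b<n. Mi $$ (i,b) \<noteq> 0" using nonzero_col_row(2)[OF Mc Mi MiM] ltn by auto
  have B0: "\<And>j. 2 \<le> j \<Longrightarrow> j \<le> d \<Longrightarrow> B $$ (0,j) = 0"
  proof -
    fix j assume j2: "2 \<le> j" and j: "j \<le> d"
    have "\<not> Delta_adj d E As 0 j"
    proof
      assume "Delta_adj d E As 0 j"
      moreover have "\<forall>j\<le>d. Delta_adj d E As 0 j \<longrightarrow> E j = E 1"
        using assms(10) unfolding is_tail_def As_def by simp
      ultimately have "E j = E 1" using j by simp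
      thus False using Edist[of j 1] j j2 d3 by auto
    qed
    moreover have "E 0 \<noteq> E j" using Edist[of 0 j] j j2 by simp
    ultimately have "E 0 * As * E j = 0\<^sub>m n n" using j unfolding Delta_adj_def n_def by simp
    moreover have sw: "\<And>a b. a < n \<Longrightarrow> b < n \<Longrightarrow> (E 0 * As * E j) $$ (a,b) = M $$ (a,0) * B $$ (0,j) * Mi $$ (j,b)"
      by (rule E_sw) (use j in simp_all)
    ultimately show "B $$ (0,j) = 0"
      by (rule zero_from_sandwich[OF _ _ Mcol[OF le0] Mirow[OF j]])
  qed
  have B1: "\<And>j. 3 \<le> j \<Longrightarrow> j \<le> d \<Longrightarrow> B $$ (1,j) = 0"
  proof -
    fix j assume j3: "3 \<le> j" and j: "j \<le> d"
    have E20: "E 2 \<noteq> E 0" by (rule Edist) (use d3 in simp_all)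
    have Ej0: "E j \<noteq> E 0" by (rule Edist) (use j j3 in simp_all)
    have "\<not> Delta_adj d E As 1 j"
    proof
      assume "Delta_adj d E As 1 j"
      note T2 = conjunct2[OF assms(10)[folded As_def, unfolded is_tail_def]]
      have D12: "Delta_adj d E As 1 2" using assms(11) unfolding As_def .
      have "E j = E 2"
        by (rule T2[rule_format, of j 2]) (use j d3 E20 Ej0 D12 \<open>Delta_adj d E As 1 j\<close> in auto)
      moreover have "E j \<noteq> E 2" by (rule Edist) (use j j3 d3 in simp_all)
      ultimately show False by simp
    qed
    moreover have "E 1 \<noteq> E j" using Edist[of 1 j] j j3 by simp
    ultimately have "E 1 * As * E j = 0\<^sub>m n n" using j d3 unfolding Delta_adj_def n_def by simp
    moreover have sw: "\<And>a b. a < n \<Longrightarrow> b < n \<Longrightarrow> (E 1 * As * E j) $$ (a,b) = M $$ (a,1) * B $$ (1,j) * Mi $$ (j,b)"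
      by (rule E_sw) (use j d3 in simp_all)
    ultimately show "B $$ (1,j) = 0"
      by (rule zero_from_sandwich[OF _ _ Mcol Mirow[OF j]]) (use d3 in auto)
  qed
  have D0: "\<forall>m\<le>d. R $$ (0,m) * ths m = B $$ (0,0) * R $$ (0,m) + B $$ (0,1) * R $$ (1,m)"
  proof (intro allI impI)
    fix m assume m: "m \<le> d"
    have "(B * R) $$ (0,m) = (\<Sum>l\<le>d. B $$ (0,l) * R $$ (l,m))" using mult_entry[OF Bc Rc, of 0 m] m ltn sumn by simp
    also have "\<dots> = B $$ (0,0) * R $$ (0,m) + B $$ (0,1) * R $$ (1,m)"
      by (rule sum_two_support) (use d3 B0 in auto)
    finally show "R $$ (0,m) * ths m = B $$ (0,0) * R $$ (0,m) + B $$ (0,1) * R $$ (1,m)"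
      using BR[of 0 m] m ltn by (simp add: mult.commute)
  qed
  have D1: "\<forall>m\<le>d. R $$ (1,m) * ths m = B $$ (1,0) * R $$ (0,m) + B $$ (1,1) * R $$ (1,m) + B $$ (1,2) * R $$ (2,m)"
  proof (intro allI impI)
    fix m assume m: "m \<le> d"
    have "(B * R) $$ (1,m) = (\<Sum>l\<le>d. B $$ (1,l) * R $$ (l,m))" using mult_entry[OF Bc Rc, of 1 m] m ltn sumn d3 by simp
    also have "\<dots> = (\<Sum>l\<in>{0,1,2}. B $$ (1,l) * R $$ (l,m))"
      by (rule sum.mono_neutral_right) (use d3 B1 in auto)
    also have "\<dots> = B $$ (1,0) * R $$ (0,m) + B $$ (1,1) * R $$ (1,m) + B $$ (1,2) * R $$ (2,m)"
      by (simp add: ac_simps)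
    finally show "R $$ (1,m) * ths m = B $$ (1,0) * R $$ (0,m) + B $$ (1,1) * R $$ (1,m) + B $$ (1,2) * R $$ (2,m)"
      using BR[of 1 m] m ltn d3 by (simp add: mult.commute)
  qed
  have nz: "\<exists>m\<le>d. R $$ (0,m) \<noteq> 0"
  proof -
    have QMc: "Q * M \<in> carrier_mat n n" using Q Mc by simp
    have PQM: "P * (Q * M) = M"
    proof -
      have "P * (Q * M) = (P * Q) * M" by (rule assoc_mult_mat[OF P Q Mc, symmetric])
      thus ?thesis using PQ Mc by simp
    qed
    have "R * (Q * M) = Mi * (P * (Q * M))" unfolding R_def by (rule assoc_mult_mat[OF Mi P QMc])
    also have "\<dots> = 1\<^sub>m n" unfolding PQM by (rule MiM)
    finally have "R * (Q * M) = 1\<^sub>m n" .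
    from nonzero_col_row(2)[OF QMc Rc this, of 0] show ?thesis using ltn n_def by auto
  qed
  have rs: "\<forall>i\<le>d. (\<Sum>j\<le>d. Y $$ (i,j)) = th 0" using rsY by blast
  show ?thesis
    by (rule core[OF d3 Yz Ynz rs Lj[of 0] Lj[of 1] Lj[of 2] nz D0 D1 assms(8)]) (use d3 in auto)
qed

end
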